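(* Let $a,b,q$ be complex numbers with $q\ne 0$. Let $A=(A_{n,k})_{n,k\ge0}$ be the infinite lower-triangular matrix with entries $$A_{n,k}=[z^{n-k}]\Big\{\frac{(az;q)_k}{(bz;q)_k}\Big\}\quad(n\ge k),\qquad A_{n,k}=0\ (n<k),$$ and let $A^{-1}=(B_{n,k}(a,b))$ be its inverse. Then for all integers $n\ge k\ge0$, $$B_{n,k}(a,b)=[z^{n-k}]\Big\{\frac{(bz;q)_{n-1}}{(az;q)_n}\Big\}-a\sum_{i=k}^{n-1}B_{n-i,1}(a,b)\,q^{(n-i)i}\,[z^{i-k}]\Big\{\frac{(bz;q)_i}{(az;q)_{i+1}}\Big\}.$$
   Context: For any integer $n$, $(x;q)_n=\prod_{j\ge0}(1-xq^j)/\prod_{j\ge0}(1-xq^{n+j})$, so $(x;q)_0=1$, $(x;q)_n=\prod_{j=0}^{n-1}(1-xq^j)$ for $n\ge1$, $(x;q)_{-1}=1/(1-x/q)$; quotients of these are regarded as formal power series in $z$, and $[z^m]\{f\}$ is the coefficient of $z^m$ in $f$. Two lower-triangular matrices $A,B$ are inverse if $\sum_{i=k}^nA_{n,i}B_{i,k}=\sum_{i=k}^nB_{n,i}A_{i,k}=\delta_{n,k}$ for all $n,k\ge0$. Equivalently, $z^k=\sum_{n\ge k}B_{n,k}(a,b)z^n(az;q)_n/(bz;q)_n$ for all $k\ge0$. Empty sums are $0$. *)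

theory Defs
  imports "HOL-Computational_Algebra.Formal_Power_Series"
begin

definition qpoch :: "complex \<Rightarrow> complex \<Rightarrow> int \<Rightarrow> complex fps" where
  "qpoch c q n =
     (if n \<ge> 0 then (\<Prod>j<nat n. 1 - fps_const (c * q ^ j) * fps_X)
      else inverse (\<Prod>j<nat (- n). 1 - fps_const (c / q ^ (j + 1)) * fps_X))"

definition Amat :: "complex \<Rightarrow> complex \<Rightarrow> complex \<Rightarrow> nat \<Rightarrow> nat \<Rightarrow> complex" where
  "Amat a b q n k =
     (if k \<le> n then fps_nth (qpoch a q (int k) * inverse (qpoch b q (int k))) (n - k) else 0)"

definition lt_inverse :: "(nat \<Rightarrow> nat \<Rightarrow> complex) \<Rightarrow> (nat \<Rightarrow> nat \<Rightarrow> complex) \<Rightarrow> bool" where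
  "lt_inverse A B \<longleftrightarrow>
     (\<forall>n k. n < k \<longrightarrow> A n k = 0) \<and> (\<forall>n k. n < k \<longrightarrow> B n k = 0) \<and>
     (\<forall>n k. (\<Sum>i=k..n. A n i * B i k) = (if n = k then 1 else 0)) \<and>
     (\<forall>n k. (\<Sum>i=k..n. B n i * A i k) = (if n = k then 1 else 0))"

end

theory Submission
  imports Defs "HOL-Computational_Algebra.Polynomial"
begin

unbundle fps_syntax

definition sc :: "complex \<Rightarrow> complex fps \<Rightarrow> complex fps" where
  "sc c f = Abs_fps (\<lambda>n. c^n * f $ n)"

lemma sc_nth[simp]: "sc c f $ n = c^n * f $ n"
  by (simp add: sc_def)

lemma sc_mult: "sc c (f*g) = sc c f * sc c g"
proof (rule fps_ext)
  fix n
  have "sc c (f*g) $ n = (\<Sum>i=0..n. c^i * f $ i * (c^(n-i) * g $ (n-i)))"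
    by (simp add: fps_mult_nth sum_distrib_left)
       (intro sum.cong refl, simp add: power_add[symmetric] mult_ac)
  then show "sc c (f*g) $ n = (sc c f * sc c g) $ n"
    by (simp add: fps_mult_nth mult_ac)
qed

lemma sc_one[simp]: "sc c 1 = 1"
  by (rule fps_ext) simp

lemma sc_diff: "sc c (f - g) = sc c f - sc c g"
  by (rule fps_ext) (simp add: algebra_simps)

lemma sc_lin: "sc c (1 - fps_const d * fps_X) = 1 - fps_const (c*d) * fps_X"
  by (rule fps_ext) (simp add: algebra_simps)

lemma sc_prod: "sc c (\<Prod>j\<in>S. F j) = (\<Prod>j\<in>S. sc c (F j))"
  by (induction S rule: infinite_finite_induct) (simp_all add: sc_mult)

lemma sc_inverse:
  assumes "f $ 0 \<noteq> 0"
  shows "sc c (inverse f) = inverse (sc c f)"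
proof -
  have "sc c f * sc c (inverse f) = 1"
    using assms by (simp add: sc_mult[symmetric] inverse_mult_eq_1')
  then show ?thesis by (simp add: fps_inverse_unique)
qed

definition pp :: "complex \<Rightarrow> complex \<Rightarrow> nat set \<Rightarrow> complex fps" where
  "pp q c S = (\<Prod>j\<in>S. 1 - fps_const (c * q^j) * fps_X)"

lemma prod_nth0: "(\<Prod>j\<in>S. F j) $ 0 = (\<Prod>j\<in>S. (F j $ 0 :: complex))"
  by (induction S rule: infinite_finite_induct) simp_all

lemma pp_0[simp]: "pp q c S $ 0 = 1"
  by (simp add: pp_def prod_nth0)

lemma qpoch_nat: "qpoch c q (int n) = pp q c {0..<n}"
  by (simp add: qpoch_def pp_def atLeast0LessThan)

lemma qpoch_nth0[simp]: "qpoch c q n $ 0 = 1"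
  by (simp add: qpoch_def prod_nth0)

lemma pp_split: "i \<le> k \<Longrightarrow> k \<le> n \<Longrightarrow> pp q c {i..<n} = pp q c {i..<k} * pp q c {k..<n}"
  unfolding pp_def by (simp add: prod.atLeastLessThan_concat)

lemma pp_shift: "pp q c {k..<k+m} = sc (q^k) (pp q c {0..<m})"
proof -
  have "pp q c {k..<k+m} = (\<Prod>j\<in>{0..<m}. 1 - fps_const (c * q^(j+k)) * fps_X)"
    unfolding pp_def using prod.shift_bounds_nat_ivl[of _ 0 k m] by (simp add: add.commute)
  also have "\<dots> = sc (q^k) (pp q c {0..<m})"
    unfolding pp_def sc_prod sc_lin by (simp add: power_add mult_ac)
  finally show ?thesis .
qed

lemma pp_last: "pp q c {i..<Suc n} = (if i \<le> n then pp q c {i..<n} * (1 - fps_const (c*q^n) * fps_X) else 1)"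
  unfolding pp_def by (simp add: prod.atLeastLessThan_Suc mult_ac)

lemma pp_first: "i < n \<Longrightarrow> pp q c {i..<n} = (1 - fps_const (c*q^i) * fps_X) * pp q c {Suc i..<n}"
  unfolding pp_def by (simp add: prod.atLeast_Suc_lessThan)

lemma pp_ne0[simp]: "pp q c S $ 0 \<noteq> 0"
  by simp


lemma nth_lin_right: "((F::complex fps) * (1 - fps_const c * fps_X)) $ Suc n = F $ Suc n - c * F $ n"
proof -
  have "F * (1 - fps_const c * fps_X) = F - fps_const c * (fps_X * F)"
    by (simp add: algebra_simps)
  then show ?thesis by simp
qed

lemma nth_lin_left: "((1 - fps_const c * fps_X) * (F::complex fps)) $ Suc n = F $ Suc n - c * F $ n"
  using nth_lin_right[of F c n] by (simp add: mult.commute)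

lemma key_rel:
  fixes a b q :: complex and r :: nat
  defines "T \<equiv> pp q b {0..<r} * inverse (pp q a {0..<Suc r})"
    and "G \<equiv> pp q b {0..<Suc r} * inverse (pp q a {0..<Suc (Suc r)})"
  shows "(q ^ Suc r - 1) * (T $ Suc r - a * G $ r) = 0"
proof -
  let ?L = "\<lambda>c. 1 - fps_const c * fps_X"
  have L0: "?L c $ 0 \<noteq> 0" for c :: complex by simp
  have R2: "G * ?L (a * q ^ Suc r) = T * ?L (b * q ^ r)"
  proof -
    have "G * ?L (a * q ^ Suc r) = pp q b {0..<r} * ?L (b * q ^ r) *
       (inverse (pp q a {0..<Suc r}) * (inverse (?L (a * q ^ Suc r)) * ?L (a * q ^ Suc r)))"
      unfolding G_def by (subst (1 2) pp_last) (simp add: fps_inverse_mult mult_ac)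
    also have "\<dots> = T * ?L (b * q ^ r)"
      by (subst inverse_mult_eq_1[OF L0]) (simp add: T_def mult_ac)
    finally show ?thesis .
  qed
  have R1: "G * ?L a = ?L b * sc q T"
  proof -
    have s1: "sc q (pp q c {0..<n}) = pp q c {1..<Suc n}" for c n
      using pp_shift[of q c 1 n] by simp
    have f1: "pp q c {0..<Suc n} = ?L c * pp q c {1..<Suc n}" for c n
      using pp_first[of 0 "Suc n" q c] by simp
    have "sc q T = pp q b {1..<Suc r} * inverse (pp q a {1..<Suc (Suc r)})"
      unfolding T_def sc_mult by (simp add: sc_inverse s1)
    moreover have "G * ?L a = pp q b {1..<Suc r} * ?L b *
       (inverse (pp q a {1..<Suc (Suc r)}) * (inverse (?L a) * ?L a))"
      unfolding G_def by (subst (1 2) f1) (simp add: fps_inverse_mult mult_ac)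
    ultimately show ?thesis
      by (subst (asm) inverse_mult_eq_1[OF L0]) (simp add: mult_ac)
  qed
  have e1: "G $ Suc r - a * G $ r = q ^ Suc r * T $ Suc r - b * (q ^ r * T $ r)"
    using arg_cong[OF R1, of "\<lambda>F. F $ Suc r"] by (simp only: nth_lin_right nth_lin_left sc_nth)
  have e2: "G $ Suc r - a * q ^ Suc r * G $ r = T $ Suc r - b * q ^ r * T $ r"
    using arg_cong[OF R2, of "\<lambda>F. F $ Suc r"] by (simp only: nth_lin_right)
  from e1 e2 show ?thesis by (simp add: algebra_simps)
qed


definition PF :: "(complex \<Rightarrow> complex fps) \<Rightarrow> bool" where
  "PF F \<longleftrightarrow> (\<forall>n. \<exists>p. \<forall>q. F q $ n = poly p q)"

lemma PF_get:
  assumes "PF F" obtains P where "\<And>n q. F q $ n = poly (P n) q"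
  using assms unfolding PF_def by metis

lemma PF_one: "PF (\<lambda>q. 1)"
  unfolding PF_def
proof
  fix n show "\<exists>p. \<forall>q. (1::complex fps) $ n = poly p q"
    by (rule exI[of _ "if n = 0 then 1 else 0"]) simp
qed

lemma PF_lin: "PF (\<lambda>q. 1 - fps_const (c * q^j) * fps_X)"
  unfolding PF_def
proof
  fix n show "\<exists>p. \<forall>q. (1 - fps_const (c * q^j) * fps_X) $ n = poly p q"
    by (rule exI[of _ "if n = 0 then 1 else if n = 1 then monom (-c) j else 0"])
       (simp add: poly_monom)
qed

lemma PF_mult:
  assumes "PF F" "PF G" shows "PF (\<lambda>q. F q * G q)"
proof -
  obtain P where P: "\<And>n q. F q $ n = poly (P n) q" using PF_get[OF assms(1)] by blast
  obtain Q where Q: "\<And>n q. G q $ n = poly (Q n) q" using PF_get[OF assms(2)] by blast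
  show ?thesis unfolding PF_def
  proof
    fix n show "\<exists>p. \<forall>q. (F q * G q) $ n = poly p q"
      by (rule exI[of _ "\<Sum>i=0..n. P i * Q (n - i)"])
         (simp add: fps_mult_nth poly_sum P Q)
  qed
qed

lemma PF_prod:
  assumes "\<And>j. PF (\<lambda>q. H q j)" shows "PF (\<lambda>q. \<Prod>j\<in>S. H q j)"
proof (induction S rule: infinite_finite_induct)
  case (infinite A) then show ?case using PF_one by simp
next
  case empty then show ?case using PF_one by simp
next
  case (insert x F)
  then show ?case using PF_mult[OF assms[of x] insert(3)] by simp
qed

lemma PF_pp: "PF (\<lambda>q. pp q c S)"
  unfolding pp_def by (rule PF_prod) (rule PF_lin)

lemma PF_inverse:
  assumes "PF F" "\<And>q. F q $ 0 = 1" shows "PF (\<lambda>q. inverse (F q))"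
proof -
  obtain P where P: "\<And>n q. F q $ n = poly (P n) q" using PF_get[OF assms(1)] by blast
  have rec: "inverse (F q) $ n = - (\<Sum>i=0..<n. inverse (F q) $ i * F q $ (n - i))"
    if "n > 0" for q n
  proof -
    have "(inverse (F q) * F q) $ n = 0"
      using inverse_mult_eq_1[of "F q"] assms(2) that by simp
    then have "(\<Sum>i=0..<n. inverse (F q) $ i * F q $ (n - i)) + inverse (F q) $ n = 0"
      using assms(2)[of q] by (simp add: fps_mult_nth sum.atLeast0_atMost_Suc_shift
          atLeastLessThanSuc_atLeastAtMost[symmetric] sum.atLeast0_lessThan_Suc)
    then show ?thesis by (simp add: eq_neg_iff_add_eq_0 add.commute)
  qed
  have "\<exists>p. \<forall>q. inverse (F q) $ n = poly p q" for n
  proof (induction n rule: less_induct)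
    case (less n)
    show ?case
    proof (cases "n = 0")
      case True then show ?thesis using assms(2) by (intro exI[of _ 1]) simp
    next
      case False
      from less have "\<forall>i\<in>{0..<n}. \<exists>p. \<forall>q. inverse (F q) $ i = poly p q" by simp
      then obtain R where R: "\<And>i q. i \<in> {0..<n} \<Longrightarrow> inverse (F q) $ i = poly (R i) q"
        by metis
      show ?thesis
        by (rule exI[of _ "- (\<Sum>i=0..<n. R i * P (n - i))"])
           (use False in \<open>simp add: rec poly_sum R P\<close>)
    qed
  qed
  then show ?thesis unfolding PF_def by blast
qed


lemma key_lemma:
  fixes a b q :: complex and r :: nat
  shows "(pp q b {0..<r} * inverse (pp q a {0..<Suc r})) $ Suc r
       = a * (pp q b {0..<Suc r} * inverse (pp q a {0..<Suc (Suc r)})) $ r"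
proof -
  have "PF (\<lambda>q. pp q b {0..<r} * inverse (pp q a {0..<Suc r}))"
    by (intro PF_mult PF_inverse PF_pp) simp
  then obtain P1 where P1: "\<And>n q. (pp q b {0..<r} * inverse (pp q a {0..<Suc r})) $ n = poly (P1 n) q"
    using PF_get by blast
  have "PF (\<lambda>q. pp q b {0..<Suc r} * inverse (pp q a {0..<Suc (Suc r)}))"
    by (intro PF_mult PF_inverse PF_pp) simp
  then obtain P2 where P2: "\<And>n q. (pp q b {0..<Suc r} * inverse (pp q a {0..<Suc (Suc r)})) $ n = poly (P2 n) q"
    using PF_get by blast
  define p where "p = P1 (Suc r) - smult a (P2 r)"
  have pq: "(x ^ Suc r - 1) * poly p x = 0" for x
    using key_rel[of x r b a] unfolding p_def by (simp add: P1 P2)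
  have "p = 0"
  proof (rule ccontr)
    assume "p \<noteq> 0"
    then have f1: "finite {x. poly p x = 0}" by (rule poly_roots_finite)
    have f2: "finite {x::complex. x ^ Suc r = 1}" by (rule finite_roots_unity) simp
    have "UNIV \<subseteq> {x. poly p x = 0} \<union> {x::complex. x ^ Suc r = 1}"
      using pq by auto
    then have "finite (UNIV :: complex set)" using f1 f2 finite_subset by blast
    then show False using infinite_UNIV_char_0 by blast
  qed
  then show ?thesis using P1 P2 p_def by (metis eq_iff_diff_eq_0 poly_0 poly_diff poly_smult)
qed


lemma conv:
  assumes "k \<le> n"
  shows "(\<Sum>i=k..n. F $ (n-i) * G $ (i-k)) = ((F::complex fps) * G) $ (n-k)"
proof -
  have "(F*G) $ (n-k) = (G*F) $ (n-k)" by (simp add: mult.commute)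
  also have "\<dots> = (\<Sum>j=0..n-k. G $ j * F $ (n - k - j))" by (simp add: fps_mult_nth)
  also have "\<dots> = (\<Sum>i=0+k..(n-k)+k. G $ (i-k) * F $ (n - i))"
    by (subst sum.shift_bounds_cl_nat_ivl) (intro sum.cong refl, simp add: add.commute)
  also have "\<dots> = (\<Sum>i=k..n. F $ (n-i) * G $ (i-k))"
    using assms by (simp add: mult.commute)
  finally show ?thesis by simp
qed

lemma cancel:
  assumes "k \<le> m" "k \<le> n"
  shows "(pp q b {0..<m} * inverse (pp q a {0..<n})) * (pp q a {0..<k} * inverse (pp q b {0..<k}))
       = pp q b {k..<m} * inverse (pp q a {k..<n})"
proof -
  have "(pp q b {0..<m} * inverse (pp q a {0..<n})) * (pp q a {0..<k} * inverse (pp q b {0..<k}))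
      = pp q b {k..<m} * inverse (pp q a {k..<n}) * ((inverse (pp q a {0..<k}) * pp q a {0..<k})
          * (pp q b {0..<k} * inverse (pp q b {0..<k})))"
    using assms by (simp only: pp_split[of 0 k m] pp_split[of 0 k n] fps_inverse_mult le0) (simp only: mult_ac)
  also have "\<dots> = pp q b {k..<m} * inverse (pp q a {k..<n})"
    by (simp add: inverse_mult_eq_1 inverse_mult_eq_1')
  finally show ?thesis .
qed

lemma shifted:
  "(pp q b {k..<k+m} * inverse (pp q a {k..<k+m'})) $ j
   = q^(k*j) * (pp q b {0..<m} * inverse (pp q a {0..<m'})) $ j"
  by (simp only: pp_shift sc_inverse[symmetric, OF pp_ne0] sc_mult[symmetric] sc_nth power_mult)


lemma swap_tri:
  "(\<Sum>l=(a::nat)..m. \<Sum>N=l..m. g l N) = (\<Sum>N=a..m. \<Sum>l=a..N. (g l N :: complex))"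
proof -
  have "(\<Sum>l\<in>{a..m}. \<Sum>N\<in>{N\<in>{a..m}. l \<le> N}. g l N) = (\<Sum>N\<in>{a..m}. \<Sum>l\<in>{l\<in>{a..m}. l \<le> N}. g l N)"
    by (rule sum.swap_restrict) auto
  moreover have "(\<Sum>l\<in>{a..m}. \<Sum>N\<in>{N\<in>{a..m}. l \<le> N}. g l N) = (\<Sum>l=a..m. \<Sum>N=l..m. g l N)"
    by (intro sum.cong refl) auto
  moreover have "(\<Sum>N\<in>{a..m}. \<Sum>l\<in>{l\<in>{a..m}. l \<le> N}. g l N) = (\<Sum>N=a..m. \<Sum>l=a..N. g l N)"
    by (intro sum.cong refl) auto
  ultimately show ?thesis by simp
qed

lemma swap_tri2:
  "(\<Sum>i=(a::nat)..n. \<Sum>j=i..<n. g i j) = (\<Sum>j=a..<n. \<Sum>i=a..j. (g i j :: complex))"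
proof -
  have "(\<Sum>i\<in>{a..n}. \<Sum>j\<in>{j\<in>{a..<n}. i \<le> j}. g i j) = (\<Sum>j\<in>{a..<n}. \<Sum>i\<in>{i\<in>{a..n}. i \<le> j}. g i j)"
    by (rule sum.swap_restrict) auto
  moreover have "(\<Sum>i\<in>{a..n}. \<Sum>j\<in>{j\<in>{a..<n}. i \<le> j}. g i j) = (\<Sum>i=a..n. \<Sum>j=i..<n. g i j)"
    by (intro sum.cong refl) auto
  moreover have "(\<Sum>j\<in>{a..<n}. \<Sum>i\<in>{i\<in>{a..n}. i \<le> j}. g i j) = (\<Sum>j=a..<n. \<Sum>i=a..j. g i j)"
    by (intro sum.cong refl) auto
  ultimately show ?thesis by simp
qed

lemma Amat_pp: "k \<le> n \<Longrightarrow> Amat a b q n k = (pp q a {0..<k} * inverse (pp q b {0..<k})) $ (n - k)"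
  by (simp add: Amat_def qpoch_nat)

lemma col1:
  assumes inv: "lt_inverse (Amat a b q) B" and m: "1 \<le> m"
  shows "(\<Sum>l=1..m. B l 1 * (q^(l*(m-l)) * (pp q b {0..<m-l} * inverse (pp q a {0..<Suc (m-l)})) $ (m-l)))
       = (pp q b {0..<m} * inverse (pp q a {0..<Suc m})) $ (m-1)"
proof -
  define h where "h = pp q b {0..<m} * inverse (pp q a {0..<Suc m})"
  have s1: "q^(l*(m-l)) * (pp q b {0..<m-l} * inverse (pp q a {0..<Suc (m-l)})) $ (m-l)
      = (\<Sum>N=l..m. h $ (m-N) * Amat a b q N l)" if l: "l \<in> {1..m}" for l
  proof -
    have "q^(l*(m-l)) * (pp q b {0..<m-l} * inverse (pp q a {0..<Suc (m-l)})) $ (m-l)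
        = (pp q b {l..<l+(m-l)} * inverse (pp q a {l..<l+Suc (m-l)})) $ (m-l)"
      by (rule shifted[symmetric])
    also have "\<dots> = (pp q b {l..<m} * inverse (pp q a {l..<Suc m})) $ (m-l)"
      using l by simp
    also have "\<dots> = (h * (pp q a {0..<l} * inverse (pp q b {0..<l}))) $ (m-l)"
      unfolding h_def using l by (subst cancel) auto
    also have "\<dots> = (\<Sum>N=l..m. h $ (m-N) * (pp q a {0..<l} * inverse (pp q b {0..<l})) $ (N-l))"
      using l by (subst conv) auto
    also have "\<dots> = (\<Sum>N=l..m. h $ (m-N) * Amat a b q N l)"
      by (intro sum.cong refl) (simp add: Amat_pp)
    finally show ?thesis .
  qed
  have "(\<Sum>l=1..m. B l 1 * (q^(l*(m-l)) * (pp q b {0..<m-l} * inverse (pp q a {0..<Suc (m-l)})) $ (m-l)))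
      = (\<Sum>l=1..m. \<Sum>N=l..m. h $ (m-N) * (Amat a b q N l * B l 1))"
    by (intro sum.cong refl) (simp add: s1 sum_distrib_left sum_distrib_right mult_ac)
  also have "\<dots> = (\<Sum>N=1..m. h $ (m-N) * (\<Sum>l=1..N. Amat a b q N l * B l 1))"
    by (subst swap_tri) (simp add: sum_distrib_left)
  also have "\<dots> = (\<Sum>N=1..m. h $ (m-N) * (if N = 1 then 1 else 0))"
    using inv unfolding lt_inverse_def by simp
  also have "\<dots> = (\<Sum>N\<in>{1..m}. if N = 1 then h $ (m-N) else 0)"
    by (intro sum.cong refl) auto
  also have "\<dots> = h $ (m-1)"
    using m by (subst sum.delta) auto
  finally show ?thesis unfolding h_def .
qed


lemma reidx: "(\<Sum>j=(k::nat)..<k+m. g j) = (\<Sum>l=1..m. (g (k+m-l) :: complex))"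
  by (rule sum.reindex_bij_witness[of _ "\<lambda>l. k+m-l" "\<lambda>j. k+m-j"]) auto

lemma CA:
  fixes a b q :: complex and B :: "nat \<Rightarrow> nat \<Rightarrow> complex"
  assumes inv: "lt_inverse (Amat a b q) B" and kn: "k \<le> n"
  defines "C \<equiv> \<lambda>n k. fps_nth (qpoch b q (int n - 1) * inverse (qpoch a q (int n))) (n - k)
    - a * (\<Sum>i=k..<n. B (n - i) 1 * q ^ ((n - i) * i) *
             fps_nth (qpoch b q (int i) * inverse (qpoch a q (int i + 1))) (i - k))"
  shows "(\<Sum>i=k..n. C n i * Amat a b q i k) = (if n = k then 1 else 0)"
proof -
  define Gn where "Gn = qpoch b q (int n - 1) * inverse (qpoch a q (int n))"
  define fk where "fk = pp q a {0..<k} * inverse (pp q b {0..<k})"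
  define h where "h = (\<lambda>j. qpoch b q (int j) * inverse (qpoch a q (int j + 1)))"
  define E where "E = (\<lambda>i. \<Sum>j=i..<n. B (n - j) 1 * q ^ ((n - j) * j) * h j $ (j - i))"
  have Cdef: "C n i = Gn $ (n - i) - a * E i" for i
    unfolding C_def Gn_def E_def h_def by simp
  have A: "i \<in> {k..n} \<Longrightarrow> Amat a b q i k = fk $ (i - k)" for i
    by (simp add: Amat_pp fk_def)
  have split: "(\<Sum>i=k..n. C n i * Amat a b q i k)
      = (\<Sum>i=k..n. Gn $ (n - i) * fk $ (i - k)) - a * (\<Sum>i=k..n. E i * Amat a b q i k)"
  proof -
    have "(\<Sum>i=k..n. C n i * Amat a b q i k)
        = (\<Sum>i=k..n. Gn $ (n - i) * Amat a b q i k - a * (E i * Amat a b q i k))"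
      by (intro sum.cong refl) (simp only: Cdef left_diff_distrib mult.assoc)
    also have "\<dots> = (\<Sum>i=k..n. Gn $ (n - i) * Amat a b q i k) - a * (\<Sum>i=k..n. E i * Amat a b q i k)"
      by (simp only: sum_subtractf sum_distrib_left)
    also have "(\<Sum>i=k..n. Gn $ (n - i) * Amat a b q i k) = (\<Sum>i=k..n. Gn $ (n - i) * fk $ (i - k))"
      by (intro sum.cong refl) (simp only: A)
    finally show ?thesis .
  qed
  have DA: "(\<Sum>i=k..n. Gn $ (n - i) * fk $ (i - k)) = (Gn * fk) $ (n - k)"
    using kn by (rule conv)
  have EA: "(\<Sum>i=k..n. E i * Amat a b q i k)
      = (\<Sum>j=k..<n. B (n - j) 1 * q ^ ((n - j) * j) * (h j * fk) $ (j - k))"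
  proof -
    have "(\<Sum>i=k..n. E i * Amat a b q i k)
        = (\<Sum>i=k..n. \<Sum>j=i..<n. B (n - j) 1 * q ^ ((n - j) * j) * (h j $ (j - i) * fk $ (i - k)))"
      unfolding E_def by (intro sum.cong refl) (simp add: A sum_distrib_right sum_distrib_left mult_ac)
    also have "\<dots> = (\<Sum>j=k..<n. \<Sum>i=k..j. B (n - j) 1 * q ^ ((n - j) * j) * (h j $ (j - i) * fk $ (i - k)))"
      by (rule swap_tri2)
    also have "\<dots> = (\<Sum>j=k..<n. B (n - j) 1 * q ^ ((n - j) * j) * (h j * fk) $ (j - k))"
      by (intro sum.cong refl) (simp add: sum_distrib_left[symmetric] conv)
    finally show ?thesis .
  qed
  show ?thesis
  proof (cases "n = k")
    case True
    then show ?thesis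
      using split DA by (simp add: Gn_def fk_def E_def)
  next
    case False
    from False kn have "k < n" by simp
    then obtain r where n0: "n = Suc (k + r)" using less_imp_Suc_add by blast
    then have n: "n = k + Suc r" by simp
    define m where "m = Suc r"
    have i1: "int n - 1 = int (k+r)" by (simp add: n)
    have Gn': "Gn = pp q b {0..<k+r} * inverse (pp q a {0..<k + Suc r})"
      unfolding Gn_def i1 by (simp only: qpoch_nat n)
    have "(Gn * fk) $ (n - k) = (pp q b {k..<k+r} * inverse (pp q a {k..<k + Suc r})) $ Suc r"
      unfolding Gn' fk_def n by (subst cancel) auto
    also have "\<dots> = q^(k * Suc r) * (pp q b {0..<r} * inverse (pp q a {0..<Suc r})) $ Suc r"
      by (rule shifted)
    finally have D1: "(Gn * fk) $ (n - k) = q^(k * Suc r) * a *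
        (pp q b {0..<Suc r} * inverse (pp q a {0..<Suc (Suc r)})) $ r"
      by (simp add: key_lemma)
    have hj: "(h j * fk) $ (j - k) = q^(k*(j-k)) * (pp q b {0..<j-k} * inverse (pp q a {0..<Suc (j-k)})) $ (j-k)"
      if "k \<le> j" for j
    proof -
      have "(h j * fk) $ (j - k) = (pp q b {k..<k+(j-k)} * inverse (pp q a {k..<k+Suc (j-k)})) $ (j-k)"
      proof -
        have "qpoch a q (int j + 1) = pp q a {0..<Suc j}"
          using qpoch_nat[of a q "Suc j"] by (simp add: add.commute)
        then have "h j = pp q b {0..<j} * inverse (pp q a {0..<Suc j})"
          unfolding h_def by (simp only: qpoch_nat)
        then have "(h j * fk) $ (j - k) = (pp q b {k..<j} * inverse (pp q a {k..<Suc j})) $ (j-k)"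
          unfolding fk_def using that by (simp only: cancel le_SucI)
        then show ?thesis using that by simp
      qed
      then show ?thesis by (simp only: shifted)
    qed
    have "(\<Sum>j=k..<n. B (n - j) 1 * q ^ ((n - j) * j) * (h j * fk) $ (j - k))
        = (\<Sum>j=k..<k+m. B (n - j) 1 * q ^ ((n - j) * j) * (q^(k*(j-k)) *
             (pp q b {0..<j-k} * inverse (pp q a {0..<Suc (j-k)})) $ (j-k)))"
      unfolding n m_def by (intro sum.cong refl) (simp add: hj)
    also have "\<dots> = (\<Sum>l=1..m. B l 1 * q ^ (l * (k+m-l)) * (q^(k*(m-l)) *
             (pp q b {0..<m-l} * inverse (pp q a {0..<Suc (m-l)})) $ (m-l)))"
      unfolding reidx n m_def by (intro sum.cong refl) auto
    also have "\<dots> = q^(k*m) * (\<Sum>l=1..m. B l 1 * (q^(l*(m-l)) *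
             (pp q b {0..<m-l} * inverse (pp q a {0..<Suc (m-l)})) $ (m-l)))"
      unfolding sum_distrib_left
    proof (intro sum.cong refl)
      fix l assume l: "l \<in> {1..m}"
      have "l * (k+m-l) + k*(m-l) = k*m + l*(m-l)"
      proof -
        obtain d where d: "m = l + d" using l le_Suc_ex by auto
        show ?thesis unfolding d by (simp add: algebra_simps)
      qed
      then have "q ^ (l * (k+m-l)) * q^(k*(m-l)) = q^(k*m) * q^(l*(m-l))"
        by (metis power_add)
      then show "B l 1 * q ^ (l * (k+m-l)) * (q^(k*(m-l)) *
             (pp q b {0..<m-l} * inverse (pp q a {0..<Suc (m-l)})) $ (m-l))
           = q^(k*m) * (B l 1 * (q^(l*(m-l)) *
             (pp q b {0..<m-l} * inverse (pp q a {0..<Suc (m-l)})) $ (m-l)))"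
        by (simp add: mult_ac)
    qed
    also have "\<dots> = q^(k*m) * (pp q b {0..<m} * inverse (pp q a {0..<Suc m})) $ (m-1)"
      using col1[OF inv, of m] by (simp add: m_def)
    finally have E1: "(\<Sum>i=k..n. E i * Amat a b q i k) = q^(k*m) * (pp q b {0..<m} * inverse (pp q a {0..<Suc m})) $ (m-1)"
      using EA by simp
    show ?thesis
      using split DA D1 E1 False by (simp add: m_def n)
  qed
qed


theorem theorem2p1:
  fixes a b q :: complex and B :: "nat \<Rightarrow> nat \<Rightarrow> complex" and n k :: nat
  assumes "q \<noteq> 0"
    and "lt_inverse (Amat a b q) B"
    and "k \<le> n"
  shows "B n k =
    fps_nth (qpoch b q (int n - 1) * inverse (qpoch a q (int n))) (n - k)
    - a * (\<Sum>i=k..<n. B (n - i) 1 * q ^ ((n - i) * i) *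
             fps_nth (qpoch b q (int i) * inverse (qpoch a q (int i + 1))) (i - k))"
proof -
  define C where "C \<equiv> \<lambda>n k. fps_nth (qpoch b q (int n - 1) * inverse (qpoch a q (int n))) (n - k)
    - a * (\<Sum>i=k..<n. B (n - i) 1 * q ^ ((n - i) * i) *
             fps_nth (qpoch b q (int i) * inverse (qpoch a q (int i + 1))) (i - k))"
  have inv: "lt_inverse (Amat a b q) B" by fact
  have CA': "(\<Sum>i=k..n. C n i * Amat a b q i k) = (if n = k then 1 else 0)" if "k \<le> n" for k
    using CA[OF inv that] unfolding C_def by simp
  have BA: "(\<Sum>i=k..n. B n i * Amat a b q i k) = (if n = k then 1 else 0)" for k
    using inv unfolding lt_inverse_def by blast
  have Akk: "Amat a b q k k = 1" for k
    by (simp add: Amat_pp)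
  have "k \<le> n \<Longrightarrow> B n k = C n k"
  proof (induction "n - k" arbitrary: k rule: less_induct)
    case less
    have IH: "B n i = C n i" if "i \<in> {Suc k..n}" for i
      using less(1)[of i] that less(2) by auto
    have "B n k + (\<Sum>i=Suc k..n. B n i * Amat a b q i k)
        = C n k + (\<Sum>i=Suc k..n. C n i * Amat a b q i k)"
      using BA[of k] CA'[OF less(2)] less(2)
      by (simp add: sum.atLeast_Suc_atMost Akk)
    moreover have "(\<Sum>i=Suc k..n. B n i * Amat a b q i k) = (\<Sum>i=Suc k..n. C n i * Amat a b q i k)"
      by (intro sum.cong refl) (simp add: IH)
    ultimately show ?case by simp
  qed
  then show ?thesis using assms(3) unfolding C_def by simp
qed

end
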